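(* Let $d\ge5$ and let $q_1,\ldots,q_d$ be real numbers with $|q_i|\ge e^e$, of which $r\ge1$ are positive and $s\ge1$ negative, $r+s=d$. Let $P$, $q_0$, $q$, $|Q|$, $S_j$, $u$ be as defined below, and let $\pi$ be any permutation of $\{1,\ldots,d\}$. Define $$\mathcal J = \{\alpha\in(0,\infty) : (8dP q_0^{1/2})^{-1} < \alpha < u(P)\},$$ $$\mathcal J_\pi = \{\alpha\in\mathcal J : |q_{\pi(1)}|^{1/2}|S_{\pi(1)}(\alpha)| \le \cdots \le |q_{\pi(d)}|^{1/2}|S_{\pi(d)}(\alpha)|\},$$ $$\mathcal F = \{\alpha\in\mathcal J_\pi : |q_{\pi(i)}|^{1/2}|S_{\pi(i)}(\alpha)| > P\,(u(P)^2 q)^{-1/\min\{i,d-4\}} \text{ for all } i=1,\ldots,d\}.$$ Then $$\int_{\mathcal J_\pi\setminus\mathcal F} |S_1(\alpha)\cdots S_d(\alpha)|\,\mathrm{d}\alpha \le C\,|Q|^{-1/2} P^{d-2}(\log P)^{-1},$$ where $C$ depends only on $d$.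
   Context: Notation: $e(x)=\exp(2\pi i x)$; $q_0 = \min_j|q_j|$, $q = \max_j|q_j|$, $|Q| = \prod_{j=1}^d|q_j|$; $u(P) = (\log(P+e))^2$; $S_j(\alpha) = \sum_{m\in\mathbb{Z},\ P < |q_j|^{1/2} m < 2dP} e(\alpha q_j m^2)$. The parameter $P$ is $P = \exp\{(1 + \tfrac{10 d^2}{\log\log H})\log H\}$ with $H = C_d\, q^{\frac12+\beta}$, $C_d\ge1$ a constant depending on $d$, and $\beta$ given, with $r'=\max(r,s)$, $s'=\min(r,s)$, by $\beta = \frac{r'}{2s'}$ if $r'\ge s'+3$, $\beta=\frac{s'+2}{2(s'-1)}$ if $r'\in\{s'+1,s'+2\}$, $\beta = \frac{s'+1}{2(s'-2)}$ if $r'=s'$. *)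

theory Defs
  imports "HOL-Analysis.Analysis"
begin

definition ee :: "real \<Rightarrow> complex" where
  "ee x = exp (2 * of_real pi * \<i> * of_real x)"

definition upar :: "real \<Rightarrow> real" where
  "upar P = (ln (P + exp 1))\<^sup>2"

definition Ssum :: "nat \<Rightarrow> real \<Rightarrow> real \<Rightarrow> real \<Rightarrow> complex" where
  "Ssum d P qj \<alpha> =
     (\<Sum>m \<in> {m::int. P < sqrt \<bar>qj\<bar> * of_int m \<and> sqrt \<bar>qj\<bar> * of_int m < 2 * real d * P}.
        ee (\<alpha> * qj * (of_int m)\<^sup>2))"

definition betapar :: "nat \<Rightarrow> nat \<Rightarrow> real" where
  "betapar r s =
     (let r' = max r s; s' = min r s in
      if r' \<ge> s' + 3 then real r' / (2 * real s')
      else if r' = s' + 1 \<or> r' = s' + 2 then (real s' + 2) / (2 * (real s' - 1))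
      else (real s' + 1) / (2 * (real s' - 2)))"

definition Hpar :: "real \<Rightarrow> real \<Rightarrow> real \<Rightarrow> real" where
  "Hpar Cd qmax \<beta> = Cd * qmax powr (1/2 + \<beta>)"

definition Ppar :: "nat \<Rightarrow> real \<Rightarrow> real" where
  "Ppar d H = exp ((1 + 10 * (real d)\<^sup>2 / ln (ln H)) * ln H)"

end

theory Submission
  imports Defs "HOL-Analysis.Analysis"
begin

lemma harm_le_ln: "(harm n :: real) \<le> 1 + ln (real n) \<or> n = 0"
proof (induction n)
  case 0 then show ?case by simp
next
  case (Suc n)
  show ?case
  proof (cases "n = 0")
    case True then show ?thesis by (simp add: harm_def)
  next
    case False
    then have n1: "real n \<ge> 1" by simp
    have "ln (real n / (real n + 1)) \<le> real n / (real n + 1) - 1"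
      using n1 by (intro ln_le_minus_one) auto
    moreover have "ln (real n / (real n + 1)) = ln (real n) - ln (real n + 1)"
      using n1 by (subst ln_div) auto
    moreover have "real n / (real n + 1) - 1 = - 1 / (real n + 1)"
      using n1 by (simp add: field_simps)
    ultimately have "1 / (real n + 1) \<le> ln (real n + 1) - ln (real n)" by linarith
    then show ?thesis using Suc False by (simp add: harm_Suc add_ac inverse_eq_divide)
  qed
qed



lemma ee_mult_cnj: "ee x * cnj (ee y) = ee (x - y)"
  unfolding ee_def by (simp add: exp_cnj flip: exp_add) (simp add: algebra_simps)

lemma ee_add: "ee (x + y) = ee x * ee y"
  unfolding ee_def by (simp add: algebra_simps flip: exp_add)

lemma Re_ee: "Re (ee x) = cos (2 * pi * x)"
  unfolding ee_def by (simp add: Re_exp mult.commute)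

definition sq2 :: "int \<times> int \<Rightarrow> int" where "sq2 p = (fst p)\<^sup>2 + (snd p)\<^sup>2"

lemma S_fourth:
  fixes M :: "int set"
  assumes "finite M"
  shows "(norm (\<Sum>m\<in>M. ee (a * c * (of_int m)\<^sup>2)))^4
     = (\<Sum>p\<in>M\<times>M. \<Sum>p'\<in>M\<times>M. cos (2 * pi * a * c * of_int (sq2 p - sq2 p')))"
proof -
  define T where "T = (\<Sum>m\<in>M. ee (a * c * (of_int m)\<^sup>2))"
  have T2: "T^2 = (\<Sum>p\<in>M\<times>M. ee (a * c * of_int (sq2 p)))"
    unfolding T_def power2_eq_square[of "sum _ _"] sum_product sum.cartesian_product
    by (rule sum.cong) (auto simp: sq2_def ee_add[symmetric] algebra_simps)
  have "complex_of_real ((norm T)^4) = of_real ((norm (T^2))^2)"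
    by (simp add: norm_power power_mult[symmetric])
  also have "\<dots> = T^2 * cnj (T^2)" by (rule complex_norm_square)
  also have "\<dots> = (\<Sum>p\<in>M\<times>M. \<Sum>p'\<in>M\<times>M. ee (a * c * of_int (sq2 p) - a * c * of_int (sq2 p')))"
    unfolding T2 cnj_sum sum_product by (simp add: ee_mult_cnj)
  finally have "(norm T)^4 = Re (\<Sum>p\<in>M\<times>M. \<Sum>p'\<in>M\<times>M. ee (a * c * of_int (sq2 p) - a * c * of_int (sq2 p')))"
    by (metis Re_complex_of_real)
  also have "\<dots> = (\<Sum>p\<in>M\<times>M. \<Sum>p'\<in>M\<times>M. cos (2 * pi * a * c * of_int (sq2 p - sq2 p')))"
    by (simp add: Re_ee algebra_simps)
  finally show ?thesis unfolding T_def .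
qed

lemma cos_has_integral:
  fixes U b :: real
  assumes "U \<ge> 0"
  shows "((\<lambda>x. cos (b * x)) has_integral (if b = 0 then U else sin (b * U) / b)) {0..U}"
proof (cases "b = 0")
  case True then show ?thesis using has_integral_const_real[of "1::real" 0 U] assms by simp
next
  case False
  have "((\<lambda>x. cos (b * x)) has_integral (sin (b * U) / b - sin (b * 0) / b)) {0..U}"
    apply (rule fundamental_theorem_of_calculus)
    using assms apply simp
  proof -
    fix x assume "x \<in> {0..U}"
    have "((\<lambda>a. sin (b * a) / b) has_real_derivative cos (b * x)) (at x within {0..U})"
      using False by (auto intro!: derivative_eq_intros)
    then show "((\<lambda>a. sin (b * a) / b) has_vector_derivative cos (b * x)) (at x within {0..U})"
      by (simp add: has_real_derivative_iff_has_vector_derivative)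
  qed
  then show ?thesis using False by simp
qed

lemma cos_integral_bound:
  fixes U b :: real
  assumes "U \<ge> 0"
  shows "(if b = 0 then U else sin (b * U) / b) \<le> (if b = 0 then U else 1 / \<bar>b\<bar>)"
proof (cases "b = 0")
  case False
  have "sin (b * U) / b \<le> \<bar>sin (b * U) / b\<bar>" by (rule abs_ge_self)
  also have "\<dots> = \<bar>sin (b*U)\<bar> / \<bar>b\<bar>" by (simp add: abs_divide)
  also have "\<dots> \<le> 1 / \<bar>b\<bar>" using False by (intro divide_right_mono) auto
  finally show ?thesis using False by simp
qed simp



lemma sum_fiber_div:
  fixes s :: "'a \<Rightarrow> 'b" and F :: "'b \<Rightarrow> real"
  assumes "finite A"
  shows "(\<Sum>a\<in>A. F (s a) / real (card {x\<in>A. s x = s a})) = (\<Sum>v\<in>s ` A. F v)"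
proof -
  have "(\<Sum>a\<in>A. F (s a) / real (card {x\<in>A. s x = s a}))
      = (\<Sum>v\<in>s ` A. \<Sum>a\<in>{x\<in>A. s x = v}. F (s a) / real (card {x\<in>A. s x = s a}))"
    using assms by (rule sum.image_gen)
  also have "\<dots> = (\<Sum>v\<in>s ` A. F v)"
  proof (rule sum.cong)
    fix v assume v: "v \<in> s ` A"
    have ne: "card {x\<in>A. s x = v} \<noteq> 0" using v assms by auto
    have "(\<Sum>a\<in>{x\<in>A. s x = v}. F (s a) / real (card {x\<in>A. s x = s a}))
        = (\<Sum>a\<in>{x\<in>A. s x = v}. F v / real (card {x\<in>A. s x = v}))"
      by (rule sum.cong) auto
    also have "\<dots> = F v" using ne by simp
    finally show "(\<Sum>a\<in>{x\<in>A. s x = v}. F (s a) / real (card {x\<in>A. s x = s a})) = F v" .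
  qed simp
  finally show ?thesis .
qed

lemma group_bound:
  fixes s :: "'a \<Rightarrow> int" and k :: "int \<Rightarrow> real"
  assumes A: "finite A" and ksym: "\<And>n. k (- n) = k n" and kpos: "\<And>n. k n \<ge> 0"
    and K: "\<And>v. v \<in> s ` A \<Longrightarrow> (\<Sum>w\<in>s ` A. k (v - w)) \<le> K"
  shows "(\<Sum>a\<in>A. \<Sum>b\<in>A. k (s a - s b)) \<le> K * (\<Sum>b\<in>A. real (card {a\<in>A. s a = s b}))"
proof -
  define r where "r v = real (card {a\<in>A. s a = v})" for v
  have rpos: "r (s a) \<ge> 1" if "a \<in> A" for a
  proof -
    have "{x\<in>A. s x = s a} \<noteq> {}" using that by auto
    then have "card {x\<in>A. s x = s a} \<noteq> 0" using A by simp
    then show ?thesis unfolding r_def by simp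
  qed
  have step1: "k (s a - s b) \<le> (r (s b) / r (s a) + r (s a) / r (s b)) / 2 * k (s a - s b)"
    if "a \<in> A" "b \<in> A" for a b
  proof -
    have x: "r (s a) > 0" "r (s b) > 0" using rpos that by (auto intro: less_le_trans[of 0 1])
    have "2 \<le> r (s b) / r (s a) + r (s a) / r (s b)"
    proof -
      have "(r (s b) - r (s a))^2 \<ge> 0" by simp
      then have "2 * r (s a) * r (s b) \<le> r (s b) * r (s b) + r (s a) * r (s a)"
        by (simp add: power2_eq_square algebra_simps)
      then show ?thesis using x by (simp add: field_simps)
    qed
    then show ?thesis using kpos[of "s a - s b"]
      by (metis divide_le_eq_1_pos le_divide_eq_1_pos mult_le_cancel_right1 nle_le verit_comp_simplify(3) zero_less_numeral)
  qed
  have "(\<Sum>a\<in>A. \<Sum>b\<in>A. k (s a - s b))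
      \<le> (\<Sum>a\<in>A. \<Sum>b\<in>A. (r (s b) / r (s a) + r (s a) / r (s b)) / 2 * k (s a - s b))"
    using step1 by (intro sum_mono) auto
  also have "\<dots> = ((\<Sum>a\<in>A. \<Sum>b\<in>A. r (s b) / r (s a) * k (s a - s b))
                   + (\<Sum>a\<in>A. \<Sum>b\<in>A. r (s a) / r (s b) * k (s a - s b))) / 2"
    by (simp add: sum.distrib sum_divide_distrib algebra_simps add_divide_distrib)
  also have "(\<Sum>a\<in>A. \<Sum>b\<in>A. r (s a) / r (s b) * k (s a - s b))
      = (\<Sum>a\<in>A. \<Sum>b\<in>A. r (s b) / r (s a) * k (s a - s b))"
    by (subst sum.swap) (metis (no_types, lifting) ksym minus_diff_eq sum.cong)
  finally have 0: "(\<Sum>a\<in>A. \<Sum>b\<in>A. k (s a - s b)) \<le> (\<Sum>a\<in>A. \<Sum>b\<in>A. r (s b) / r (s a) * k (s a - s b))"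
    by simp
  have "(\<Sum>a\<in>A. \<Sum>b\<in>A. r (s b) / r (s a) * k (s a - s b))
     = (\<Sum>b\<in>A. \<Sum>a\<in>A. r (s b) * (k (s b - s a) / r (s a)))"
    by (subst sum.swap) (metis (no_types, lifting) ksym minus_diff_eq sum.cong times_divide_eq_left times_divide_eq_right mult.commute)
  also have "\<dots> = (\<Sum>b\<in>A. r (s b) * (\<Sum>a\<in>A. k (s b - s a) / r (s a)))"
    by (simp add: sum_distrib_left)
  finally have 1: "(\<Sum>a\<in>A. \<Sum>b\<in>A. k (s a - s b)) \<le> (\<Sum>b\<in>A. r (s b) * (\<Sum>a\<in>A. k (s b - s a) / r (s a)))"
    using 0 by simp
  have 2: "(\<Sum>a\<in>A. k (s b - s a) / r (s a)) = (\<Sum>v\<in>s ` A. k (s b - v))" for b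
    unfolding r_def using sum_fiber_div[OF A, of "\<lambda>v. k (s b - v)" s] by simp
  have "(\<Sum>b\<in>A. r (s b) * (\<Sum>a\<in>A. k (s b - s a) / r (s a))) \<le> (\<Sum>b\<in>A. r (s b) * K)"
    unfolding 2 using K rpos by (intro sum_mono mult_left_mono) (auto intro: order_trans[of 0 1])
  with 1 show ?thesis by (simp add: r_def sum_distrib_left mult.commute)
qed



lemma Zsum:
  fixes f :: "int \<Rightarrow> real" and Y :: int
  shows "(\<Sum>n\<in>{-Y..Y}-{0}. f \<bar>n\<bar>) = 2 * (\<Sum>n\<in>{1..Y}. f n)"
proof -
  have eq: "{-Y..Y}-{0} = {1..Y} \<union> uminus ` {1..Y}" by (auto simp: image_uminus_atLeastAtMost)
  have disj: "{1..Y} \<inter> uminus ` {1..Y} = {}" by auto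
  have "(\<Sum>n\<in>{-Y..Y}-{0}. f \<bar>n\<bar>) = (\<Sum>n\<in>{1..Y}. f \<bar>n\<bar>) + (\<Sum>n\<in>uminus ` {1..Y}. f \<bar>n\<bar>)"
    unfolding eq by (rule sum.union_disjoint) (use disj in auto)
  also have "(\<Sum>n\<in>uminus ` {1..Y}. f \<bar>n\<bar>) = (\<Sum>n\<in>{1..Y}. f \<bar>n\<bar>)"
    by (subst sum.reindex) (auto simp: inj_on_def)
  also have "(\<Sum>n\<in>{1..Y}. f \<bar>n\<bar>) = (\<Sum>n\<in>{1..Y}. f n)" by (rule sum.cong) auto
  finally show ?thesis by simp
qed

lemma harm_int: "(\<Sum>n\<in>{1..int N}. 1 / real_of_int n) = harm N"
proof -
  have "int ` {1..N} = {1..int N}"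
    using image_int_atLeastAtMost[of 1 N] by (simp only: of_nat_1)
  then have "(\<Sum>n\<in>{1..int N}. 1 / real_of_int n) = (\<Sum>n\<in>int ` {1..N}. 1 / real_of_int n)"
    by simp
  also have "\<dots> = (\<Sum>n\<in>{1..N}. 1 / real_of_int (int n))"
    by (subst sum.reindex) (auto simp: inj_on_def)
  also have "\<dots> = harm N" by (simp add: harm_def inverse_eq_divide)
  finally show ?thesis .
qed

lemma tel: "n > 0 \<Longrightarrow> 1 / (n + 1)\<^sup>2 \<le> 1 / n - 1 / (n + 1::real)"
proof -
  assume n: "n > 0"
  have "1 / n - 1 / (n + 1) = 1 / (n * (n + 1))" using n by (simp add: field_simps)
  moreover have "1 / (n + 1)\<^sup>2 \<le> 1 / (n * (n + 1))"
    using n by (intro divide_left_mono) (auto simp: power2_eq_square)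
  ultimately show ?thesis by simp
qed

lemma inner_max_sum:
  fixes x :: int
  assumes "x \<ge> 1"
  shows "(\<Sum>y\<in>{1..int N}. 1 / (real_of_int (max x y))\<^sup>2)
     \<le> (if int N \<le> x then real N / (real_of_int x)\<^sup>2 else 2 / real_of_int x - 1 / real N)"
proof (induction N)
  case 0 then show ?case using assms by simp
next
  case (Suc N)
  have split: "{1..int (Suc N)} = insert (int N + 1) {1..int N}" by auto
  have "(\<Sum>y\<in>{1..int (Suc N)}. 1 / (real_of_int (max x y))\<^sup>2)
      = 1 / (real_of_int (max x (int N + 1)))\<^sup>2 + (\<Sum>y\<in>{1..int N}. 1 / (real_of_int (max x y))\<^sup>2)"
    unfolding split by (subst sum.insert) auto
  also have "\<dots> \<le> 1 / (real_of_int (max x (int N + 1)))\<^sup>2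
       + (if int N \<le> x then real N / (real_of_int x)\<^sup>2 else 2 / real_of_int x - 1 / real N)"
    using Suc by simp
  also have "\<dots> \<le> (if int (Suc N) \<le> x then real (Suc N) / (real_of_int x)\<^sup>2 else 2 / real_of_int x - 1 / real (Suc N))"
  proof -
    have x0: "real_of_int x \<ge> 1" using assms by simp
    consider "int N + 1 \<le> x" | "int N = x" | "int N > x" by linarith
    then show ?thesis
    proof cases
      case 1 then show ?thesis by (simp add: add_divide_distrib)
    next
      case 2
      then have xe: "real_of_int x = real N" by simp
      have N1: "real N \<ge> 1" using x0 xe by simp
      have m: "real_of_int (max x (int N + 1)) = real N + 1" using 2 by simp
      have "real N / (real_of_int x)\<^sup>2 = 1 / real N" using xe N1 by (simp add: power2_eq_square)
      moreover have "2 / real N = 1 / real N + 1 / real N" by simp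
      moreover have "\<not> int (Suc N) \<le> x" "int N \<le> x" using 2 by auto
      ultimately show ?thesis using xe m tel[of "real N"] N1 by (simp only: if_True if_False) (simp add: add_ac)
    next
      case 3
      then have N1: "real N \<ge> 1" "real N > real_of_int x" using x0 by linarith+
      have m: "real_of_int (max x (int N + 1)) = real N + 1" using 3 by simp
      have "\<not> int (Suc N) \<le> x" "\<not> int N \<le> x" using 3 by auto
      then show ?thesis using m tel[of "real N"] N1 by (simp only: if_True if_False) (simp add: add_ac)
    qed
  qed
  finally show ?case .
qed

lemma inner_max_sum2:
  fixes x Y :: int
  assumes "x \<ge> 1"
  shows "(\<Sum>y\<in>{1..Y}. 1 / (real_of_int (max x y))\<^sup>2) \<le> 2 / real_of_int x"
proof (cases "Y \<ge> 0")
  case True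
  then obtain N where N: "Y = int N" by (metis nonneg_eq_int)
  have x0: "real_of_int x \<ge> 1" using assms by simp
  show ?thesis
  proof (cases "int N \<le> x")
    case True
    then have "real N \<le> real_of_int x" by linarith
    then have "real N / (real_of_int x)\<^sup>2 \<le> 2 / real_of_int x"
      using x0 by (simp add: field_simps power2_eq_square)
    then show ?thesis using inner_max_sum[OF assms, of N] N True by simp
  next
    case False
    have "0 \<le> 1 / real N" by simp
    moreover have "(\<Sum>y\<in>{1..Y}. 1 / (real_of_int (max x y))\<^sup>2) \<le> 2 / real_of_int x - 1 / real N"
      using inner_max_sum[OF assms, of N] N False by presburger
    ultimately show ?thesis by linarith
  qed
next
  case False then show ?thesis using assms by simp
qed



definition kf :: "real \<Rightarrow> real \<Rightarrow> int \<Rightarrow> real" where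
  "kf U c n = (if n = 0 then U else 1 / (2 * pi * \<bar>c\<bar> * \<bar>real_of_int n\<bar>))"

lemma kf_sym: "kf U c (- n) = kf U c n" by (simp add: kf_def)
lemma kf_nonneg: "U \<ge> 0 \<Longrightarrow> kf U c n \<ge> 0" by (simp add: kf_def)

lemma K_bound:
  fixes V :: "int set" and Y v :: int
  assumes V: "V \<subseteq> {0..Y}" and v: "v \<in> V" and c: "c \<noteq> 0" and U: "U \<ge> 0"
  shows "(\<Sum>w\<in>V. kf U c (v - w)) \<le> U + harm (nat Y) / (pi * \<bar>c\<bar>)"
proof -
  have finV: "finite V" using V finite_subset by blast
  have Y0: "Y \<ge> 0" using V v by auto
  define g where "g n = 1 / (2 * pi * \<bar>c\<bar> * real_of_int n)" for n :: int
  have "(\<Sum>w\<in>V. kf U c (v - w)) = kf U c (v - v) + (\<Sum>w\<in>V-{v}. kf U c (v - w))"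
    using finV v by (rule sum.remove)
  also have "kf U c (v - v) = U" by (simp add: kf_def)
  also have "(\<Sum>w\<in>V-{v}. kf U c (v - w)) = (\<Sum>w\<in>V-{v}. g \<bar>v - w\<bar>)"
    by (rule sum.cong) (auto simp: kf_def g_def)
  also have "\<dots> = (\<Sum>n\<in>(\<lambda>w. v - w) ` (V-{v}). g \<bar>n\<bar>)"
    by (subst sum.reindex) (auto simp: inj_on_def)
  also have "\<dots> \<le> (\<Sum>n\<in>{-Y..Y}-{0}. g \<bar>n\<bar>)"
    apply (rule sum_mono2)
      apply simp
    subgoal proof
      fix n assume "n \<in> (\<lambda>w. v - w) ` (V-{v})"
      then obtain w where w: "w \<in> V" "w \<noteq> v" "n = v - w" by auto
      have "0 \<le> w" "w \<le> Y" "0 \<le> v" "v \<le> Y" using V w v by auto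
      then show "n \<in> {-Y..Y}-{0}" using w by auto
    qed
    using c apply (auto simp: g_def)
    done
  also have "\<dots> = 2 * (\<Sum>n\<in>{1..Y}. g n)" by (rule Zsum)
  also have "(\<Sum>n\<in>{1..Y}. g n) = (\<Sum>n\<in>{1..Y}. 1 / real_of_int n) / (2 * pi * \<bar>c\<bar>)"
    by (simp add: g_def sum_divide_distrib mult.commute)
  also have "(\<Sum>n\<in>{1..Y}. 1 / real_of_int n) = harm (nat Y)"
    using harm_int[of "nat Y"] Y0 by simp
  finally show ?thesis using c by (simp add: field_simps)
qed

lemma param:
  fixes \<alpha> \<beta> \<gamma> \<epsilon> :: int
  assumes a: "\<alpha> \<noteq> 0" and b: "\<beta> > 0" and e: "\<epsilon> > 0" and eq: "\<alpha> * \<beta> = \<gamma> * \<epsilon>"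
  defines "g \<equiv> gcd \<alpha> \<gamma>"
  defines "x \<equiv> \<alpha> div g"
  defines "y \<equiv> \<gamma> div g"
  defines "h \<equiv> \<beta> div y"
  shows "g \<ge> 1 \<and> \<alpha> = g * x \<and> \<gamma> = g * y \<and> \<beta> = h * y \<and> \<epsilon> = h * x \<and> x \<noteq> 0 \<and> y \<noteq> 0 \<and> h \<noteq> 0"
proof -
  have c: "\<gamma> \<noteq> 0" using eq a b by auto
  have g1: "g \<ge> 1" using a unfolding g_def by (simp add: gcd_pos_int[unfolded zero_less_iff_neq_zero] int_one_le_iff_zero_less)
  have ax: "\<alpha> = g * x" unfolding x_def g_def by simp
  have cy: "\<gamma> = g * y" unfolding y_def g_def by simp
  have x0: "x \<noteq> 0" using ax a by auto
  have y0: "y \<noteq> 0" using cy c by auto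
  have cop: "coprime x y" unfolding x_def y_def g_def using a by (intro div_gcd_coprime) auto
  have xb: "x * \<beta> = y * \<epsilon>" using eq ax cy g1 by (simp add: algebra_simps)
  have "y dvd x * \<beta>" using xb by simp
  then have "y dvd \<beta>" using cop by (metis coprime_commute coprime_dvd_mult_right_iff mult.commute)
  then have bh: "\<beta> = h * y" unfolding h_def by simp
  have "x * h * y = y * \<epsilon>" using xb bh by (simp add: algebra_simps)
  then have eh: "\<epsilon> = h * x" using y0 by (simp add: algebra_simps)
  have h0: "h \<noteq> 0" using bh b by auto
  show ?thesis using g1 ax cy bh eh x0 y0 h0 by simp
qed



definition BX :: "int \<Rightarrow> (int \<times> int) set" where "BX X = {1..X} \<times> {1..X}"
definition quadset :: "int \<Rightarrow> ((int \<times> int) \<times> (int \<times> int)) set" where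
  "quadset X = Sigma (BX X) (\<lambda>b. {a\<in>BX X. sq2 a = sq2 b})"

definition phi :: "(int \<times> int) \<times> (int \<times> int) \<Rightarrow> (int \<times> int) \<times> (int \<times> int)" where
  "phi z = (let \<alpha> = fst (fst z) - fst (snd z); \<beta> = fst (fst z) + fst (snd z);
               \<gamma> = snd (snd z) - snd (fst z); g = gcd \<alpha> \<gamma>
            in ((\<alpha> div g, \<gamma> div g), (g, \<beta> div (\<gamma> div g))))"

lemma phi_props:
  assumes z: "z \<in> quadset X" and ne: "fst (fst z) \<noteq> fst (snd z)"
  defines "\<alpha> \<equiv> fst (fst z) - fst (snd z)" and "\<beta> \<equiv> fst (fst z) + fst (snd z)"
    and "\<gamma> \<equiv> snd (snd z) - snd (fst z)" and "\<epsilon> \<equiv> snd (snd z) + snd (fst z)"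
  shows "\<exists>x y g h. phi z = ((x, y), (g, h)) \<and> g \<ge> 1 \<and> \<alpha> = g * x \<and> \<gamma> = g * y \<and> \<beta> = h * y
      \<and> \<epsilon> = h * x \<and> x \<noteq> 0 \<and> y \<noteq> 0 \<and> h \<noteq> 0
      \<and> \<bar>\<alpha>\<bar> \<le> X \<and> \<bar>\<gamma>\<bar> \<le> X \<and> \<beta> \<le> 2 * X \<and> \<epsilon> \<le> 2 * X \<and> \<beta> > 0 \<and> \<epsilon> > 0"
proof -
  obtain b1 b2 a1 a2 where zz: "z = ((b1, b2), (a1, a2))" by (metis prod.collapse)
  have r: "1 \<le> b1" "b1 \<le> X" "1 \<le> b2" "b2 \<le> X" "1 \<le> a1" "a1 \<le> X" "1 \<le> a2" "a2 \<le> X"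
    and sq: "a1^2 + a2^2 = b1^2 + b2^2"
    using z unfolding zz quadset_def BX_def sq2_def by auto
  have vals: "\<alpha> = b1 - a1" "\<beta> = b1 + a1" "\<gamma> = a2 - b2" "\<epsilon> = a2 + b2"
    unfolding \<alpha>_def \<beta>_def \<gamma>_def \<epsilon>_def zz by simp_all
  have a0: "\<alpha> \<noteq> 0" using ne unfolding vals zz by simp
  have b0: "\<beta> > 0" "\<epsilon> > 0" using r unfolding vals by auto
  have eq: "\<alpha> * \<beta> = \<gamma> * \<epsilon>" unfolding vals using sq by (simp add: algebra_simps power2_eq_square)
  note P = param[OF a0 b0(1) b0(2) eq]
  have ph: "phi z = ((\<alpha> div gcd \<alpha> \<gamma>, \<gamma> div gcd \<alpha> \<gamma>), (gcd \<alpha> \<gamma>, \<beta> div (\<gamma> div gcd \<alpha> \<gamma>)))"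
    unfolding phi_def Let_def \<alpha>_def \<beta>_def \<gamma>_def by simp
  have bnds: "\<bar>\<alpha>\<bar> \<le> X" "\<bar>\<gamma>\<bar> \<le> X" "\<beta> \<le> 2 * X" "\<epsilon> \<le> 2 * X" using r unfolding vals by auto
  show ?thesis using P ph bnds b0 by blast
qed

lemma phi_inj: "inj_on phi {z \<in> quadset X. fst (fst z) \<noteq> fst (snd z)}"
proof (rule inj_onI)
  fix z w assume z: "z \<in> {z \<in> quadset X. fst (fst z) \<noteq> fst (snd z)}"
    and w: "w \<in> {z \<in> quadset X. fst (fst z) \<noteq> fst (snd z)}" and e: "phi z = phi w"
  obtain x y g h where A: "phi z = ((x, y), (g, h))" "fst (fst z) - fst (snd z) = g * x"
    "snd (snd z) - snd (fst z) = g * y" "fst (fst z) + fst (snd z) = h * y"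
    "snd (snd z) + snd (fst z) = h * x"
    using phi_props[of z X] z by blast
  obtain x' y' g' h' where B: "phi w = ((x', y'), (g', h'))" "fst (fst w) - fst (snd w) = g' * x'"
    "snd (snd w) - snd (fst w) = g' * y'" "fst (fst w) + fst (snd w) = h' * y'"
    "snd (snd w) + snd (fst w) = h' * x'"
    using phi_props[of w X] w by blast
  have same: "x = x'" "y = y'" "g = g'" "h = h'" using A(1) B(1) e by auto
  obtain b1 b2 a1 a2 where zz: "z = ((b1, b2), (a1, a2))" by (metis prod.collapse)
  obtain b1' b2' a1' a2' where ww: "w = ((b1', b2'), (a1', a2'))" by (metis prod.collapse)
  have "b1 - a1 = b1' - a1'" "b1 + a1 = b1' + a1'" "a2 - b2 = a2' - b2'" "a2 + b2 = a2' + b2'"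
    using A(2-5) B(2-5) same unfolding zz ww by auto
  then show "z = w" unfolding zz ww by auto
qed



definition mx :: "int \<times> int \<Rightarrow> int" where "mx p = max \<bar>fst p\<bar> \<bar>snd p\<bar>"
definition Gs :: "int \<Rightarrow> int \<times> int \<Rightarrow> int set" where
  "Gs X p = {g. 1 \<le> g \<and> g * mx p \<le> X}"
definition Hs :: "int \<Rightarrow> int \<times> int \<Rightarrow> int set" where
  "Hs X p = {h. h \<noteq> 0 \<and> \<bar>h\<bar> * mx p \<le> 2 * X}"
definition ZZ :: "int \<Rightarrow> int set" where "ZZ X = {-X..X} - {0}"
definition Tset :: "int \<Rightarrow> ((int \<times> int) \<times> (int \<times> int)) set" where
  "Tset X = Sigma (ZZ X \<times> ZZ X) (\<lambda>p. Gs X p \<times> Hs X p)"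

lemma Gs_sub: "mx p \<ge> 1 \<Longrightarrow> Gs X p \<subseteq> {1..X div mx p}"
proof
  fix g assume m: "mx p \<ge> 1" and g: "g \<in> Gs X p"
  then have "g * mx p \<le> X" "1 \<le> g" by (auto simp: Gs_def)
  then have "g * mx p div mx p \<le> X div mx p" by (intro zdiv_mono1) (use m in auto)
  then show "g \<in> {1..X div mx p}" using m \<open>1 \<le> g\<close> by simp
qed

lemma Hs_sub: "mx p \<ge> 1 \<Longrightarrow> Hs X p \<subseteq> {-(2*X div mx p)..(2*X div mx p)} - {0}"
proof
  fix h assume m: "mx p \<ge> 1" and h: "h \<in> Hs X p"
  then have "\<bar>h\<bar> * mx p \<le> 2 * X" "h \<noteq> 0" by (auto simp: Hs_def)
  then have "\<bar>h\<bar> * mx p div mx p \<le> 2 * X div mx p" by (intro zdiv_mono1) (use m in auto)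
  then have "\<bar>h\<bar> \<le> 2 * X div mx p" using m by simp
  then show "h \<in> {-(2*X div mx p)..(2*X div mx p)} - {0}" using \<open>h \<noteq> 0\<close> by auto
qed

lemma card_Gs: "X \<ge> 0 \<Longrightarrow> mx p \<ge> 1 \<Longrightarrow> real (card (Gs X p)) \<le> real_of_int X / real_of_int (mx p)"
proof -
  assume X: "X \<ge> 0" and m: "mx p \<ge> 1"
  have "card (Gs X p) \<le> card {1..X div mx p}" by (rule card_mono) (use Gs_sub[OF m] in auto)
  also have "\<dots> = nat (X div mx p)" by simp
  finally have "real (card (Gs X p)) \<le> real (nat (X div mx p))" by linarith
  also have "\<dots> \<le> max 0 (real_of_int (X div mx p))" by simp
  also have "\<dots> \<le> max 0 (real_of_int X / real_of_int (mx p))" using real_of_int_div4 by (rule max.mono[OF order_refl])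
  also have "\<dots> = real_of_int X / real_of_int (mx p)" using X m by simp
  finally show ?thesis .
qed

lemma card_Hs: "X \<ge> 0 \<Longrightarrow> mx p \<ge> 1 \<Longrightarrow> real (card (Hs X p)) \<le> 4 * real_of_int X / real_of_int (mx p)"
proof -
  assume X: "X \<ge> 0" and m: "mx p \<ge> 1"
  define t where "t = 2 * X div mx p"
  have t0: "t \<ge> 0" unfolding t_def using X m by (simp add: pos_imp_zdiv_nonneg_iff)
  have "card (Hs X p) \<le> card ({-t..t} - {0})" by (rule card_mono) (use Hs_sub[OF m] t_def in auto)
  also have "\<dots> = nat (2 * t)" using t0 by (simp add: card_Diff_singleton)
  finally have "real (card (Hs X p)) \<le> 2 * real_of_int t" using t0 by linarith
  also have "real_of_int t \<le> real_of_int (2 * X) / real_of_int (mx p)" unfolding t_def by (rule real_of_int_div4)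
  finally show ?thesis by simp
qed



lemma mx_ge1: "p \<in> ZZ X \<times> ZZ X \<Longrightarrow> mx p \<ge> 1"
  by (auto simp: mx_def ZZ_def)

lemma card_Tset:
  assumes X: "X \<ge> 0"
  shows "real (card (Tset X)) \<le> 32 * (real_of_int X)\<^sup>2 * harm (nat X)"
proof -
  have finZ: "finite (ZZ X \<times> ZZ X)" by (simp add: ZZ_def)
  have finGH: "finite (Gs X p \<times> Hs X p)" if "p \<in> ZZ X \<times> ZZ X" for p
  proof -
    have m: "mx p \<ge> 1" using mx_ge1[OF that] .
    have "finite (Gs X p)" using Gs_sub[OF m] finite_subset by blast
    moreover have "finite (Hs X p)" using Hs_sub[OF m] finite_subset by blast
    ultimately show ?thesis by simp
  qed
  have "card (Tset X) = (\<Sum>p\<in>ZZ X \<times> ZZ X. card (Gs X p \<times> Hs X p))"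
    unfolding Tset_def using finZ finGH by (subst card_SigmaI) auto
  then have "real (card (Tset X)) = (\<Sum>p\<in>ZZ X \<times> ZZ X. real (card (Gs X p)) * real (card (Hs X p)))"
    by (simp add: card_cartesian_product)
  also have "\<dots> \<le> (\<Sum>p\<in>ZZ X \<times> ZZ X. (real_of_int X / real_of_int (mx p)) * (4 * real_of_int X / real_of_int (mx p)))"
  proof (rule sum_mono)
    fix p assume p: "p \<in> ZZ X \<times> ZZ X"
    have m: "mx p \<ge> 1" using mx_ge1[OF p] .
    show "real (card (Gs X p)) * real (card (Hs X p)) \<le> (real_of_int X / real_of_int (mx p)) * (4 * real_of_int X / real_of_int (mx p))"
      using card_Gs[OF X m] card_Hs[OF X m] m X by (intro mult_mono) auto
  qed
  also have "\<dots> = (\<Sum>p\<in>ZZ X \<times> ZZ X. 4 * (real_of_int X)\<^sup>2 * (1 / (real_of_int (mx p))\<^sup>2))"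
    by (rule sum.cong) (auto simp: power2_eq_square)
  also have "\<dots> = 4 * (real_of_int X)\<^sup>2 * (\<Sum>x\<in>ZZ X. \<Sum>y\<in>ZZ X. 1 / (real_of_int (max \<bar>x\<bar> \<bar>y\<bar>))\<^sup>2)"
    by (simp add: sum_distrib_left sum.cartesian_product mx_def split_def)
  also have "(\<Sum>x\<in>ZZ X. \<Sum>y\<in>ZZ X. 1 / (real_of_int (max \<bar>x\<bar> \<bar>y\<bar>))\<^sup>2) \<le> (\<Sum>x\<in>ZZ X. 4 / real_of_int \<bar>x\<bar>)"
  proof (rule sum_mono)
    fix x assume x: "x \<in> ZZ X"
    have x1: "\<bar>x\<bar> \<ge> 1" using x by (auto simp: ZZ_def)
    have "(\<Sum>y\<in>ZZ X. 1 / (real_of_int (max \<bar>x\<bar> \<bar>y\<bar>))\<^sup>2) = 2 * (\<Sum>y\<in>{1..X}. 1 / (real_of_int (max \<bar>x\<bar> y))\<^sup>2)"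
      unfolding ZZ_def by (rule Zsum[of "\<lambda>t. 1 / (real_of_int (max \<bar>x\<bar> t))\<^sup>2"])
    also have "\<dots> \<le> 2 * (2 / real_of_int \<bar>x\<bar>)" using inner_max_sum2[OF x1, of X] by simp
    finally show "(\<Sum>y\<in>ZZ X. 1 / (real_of_int (max \<bar>x\<bar> \<bar>y\<bar>))\<^sup>2) \<le> 4 / real_of_int \<bar>x\<bar>" by simp
  qed
  also have "(\<Sum>x\<in>ZZ X. 4 / real_of_int \<bar>x\<bar>) = 2 * (\<Sum>x\<in>{1..X}. 4 / real_of_int x)"
    unfolding ZZ_def by (rule Zsum[of "\<lambda>t. 4 / real_of_int t"])
  also have "(\<Sum>x\<in>{1..X}. 4 / real_of_int x) = 4 * (\<Sum>x\<in>{1..int (nat X)}. 1 / real_of_int x)"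
    using X by (simp add: sum_distrib_left)
  also have "(\<Sum>x\<in>{1..int (nat X)}. 1 / real_of_int x) = harm (nat X)" by (rule harm_int)
  finally show ?thesis by (simp add: mult_left_mono)
qed

lemma card_quad:
  assumes X: "X \<ge> 0"
  shows "real (card (quadset X)) \<le> (real_of_int X)\<^sup>2 * (1 + 32 * harm (nat X))"
proof -
  define D where "D = {z \<in> quadset X. fst (fst z) = fst (snd z)}"
  define Od where "Od = {z \<in> quadset X. fst (fst z) \<noteq> fst (snd z)}"
  have finB: "finite (BX X)" by (simp add: BX_def)
  have finQ: "finite (quadset X)" unfolding quadset_def using finB by auto
  have QDO: "quadset X = D \<union> Od" unfolding D_def Od_def by auto
  have "card (quadset X) \<le> card D + card Od" unfolding QDO by (rule card_Un_le)
  moreover have "card D \<le> card (BX X)"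
  proof -
    have "D \<subseteq> (\<lambda>b. (b, b)) ` BX X"
    proof
      fix z assume z: "z \<in> D"
      obtain b1 b2 a1 a2 where zz: "z = ((b1, b2), (a1, a2))" by (metis prod.collapse)
      have r: "1 \<le> b2" "1 \<le> a2" "a1 = b1" "a1^2 + a2^2 = b1^2 + b2^2" "(b1, b2) \<in> BX X"
        using z unfolding zz D_def quadset_def BX_def sq2_def by auto
      then have "a2^2 = b2^2" by simp
      then have "a2 = b2" using r(1,2) by (simp add: power2_eq_iff_nonneg)
      then show "z \<in> (\<lambda>b. (b, b)) ` BX X" using r unfolding zz by auto
    qed
    then have "card D \<le> card ((\<lambda>b. (b, b)) ` BX X)" using finB by (intro card_mono) auto
    also have "\<dots> \<le> card (BX X)" by (rule card_image_le[OF finB])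
    finally show ?thesis .
  qed
  moreover have "card Od \<le> card (Tset X)"
  proof (rule card_inj_on_le)
    show "inj_on phi Od" unfolding Od_def by (rule phi_inj)
    show "finite (Tset X)"
    proof -
      have "finite (ZZ X \<times> ZZ X)" by (simp add: ZZ_def)
      moreover have "finite (Gs X p \<times> Hs X p)" if "p \<in> ZZ X \<times> ZZ X" for p
      proof -
        have m: "mx p \<ge> 1" using mx_ge1[OF that] .
        have "finite (Gs X p)" using Gs_sub[OF m] finite_subset by blast
        moreover have "finite (Hs X p)" using Hs_sub[OF m] finite_subset by blast
        ultimately show ?thesis by simp
      qed
      ultimately show ?thesis unfolding Tset_def by auto
    qed
    show "phi ` Od \<subseteq> Tset X"
    proof
      fix t assume "t \<in> phi ` Od"
      then obtain z where z: "z \<in> Od" "t = phi z" by auto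
      then obtain x y g h where P: "phi z = ((x, y), (g, h))" "g \<ge> 1"
        "fst (fst z) - fst (snd z) = g * x" "snd (snd z) - snd (fst z) = g * y"
        "fst (fst z) + fst (snd z) = h * y" "snd (snd z) + snd (fst z) = h * x"
        "x \<noteq> 0" "y \<noteq> 0" "h \<noteq> 0"
        "\<bar>fst (fst z) - fst (snd z)\<bar> \<le> X" "\<bar>snd (snd z) - snd (fst z)\<bar> \<le> X"
        "fst (fst z) + fst (snd z) \<le> 2 * X" "snd (snd z) + snd (fst z) \<le> 2 * X"
        "fst (fst z) + fst (snd z) > 0" "snd (snd z) + snd (fst z) > 0"
        using phi_props[of z X] unfolding Od_def by blast
      have gx: "g * \<bar>x\<bar> \<le> X" "g * \<bar>y\<bar> \<le> X" using P(2,3,4,10,11) by (simp_all add: abs_mult)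
      have hx: "\<bar>h\<bar> * \<bar>x\<bar> \<le> 2 * X" "\<bar>h\<bar> * \<bar>y\<bar> \<le> 2 * X"
      proof -
        have "\<bar>h\<bar> * \<bar>x\<bar> = \<bar>h * x\<bar>" "\<bar>h\<bar> * \<bar>y\<bar> = \<bar>h * y\<bar>" by (simp_all add: abs_mult)
        then show "\<bar>h\<bar> * \<bar>x\<bar> \<le> 2 * X" "\<bar>h\<bar> * \<bar>y\<bar> \<le> 2 * X"
          using P(5,6,12,13,14,15) by auto
      qed
      have "1 * \<bar>x\<bar> \<le> g * \<bar>x\<bar>" "1 * \<bar>y\<bar> \<le> g * \<bar>y\<bar>" using P(2) by (intro mult_right_mono; simp)+
      then have xX: "\<bar>x\<bar> \<le> X" "\<bar>y\<bar> \<le> X" using gx by auto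
      have "(x, y) \<in> ZZ X \<times> ZZ X" using xX P(7,8) by (auto simp: ZZ_def)
      moreover have "g \<in> Gs X (x, y)" using gx P(2) by (auto simp: Gs_def mx_def max_def)
      moreover have "h \<in> Hs X (x, y)" using hx P(9) by (auto simp: Hs_def mx_def max_def)
      ultimately show "t \<in> Tset X" using z(2) P(1) by (simp add: Tset_def)
    qed
  qed
  ultimately have "real (card (quadset X)) \<le> real (card (BX X)) + real (card (Tset X))" by linarith
  also have "real (card (BX X)) = (real_of_int X)\<^sup>2" using X by (simp add: BX_def card_cartesian_product power2_eq_square)
  also note card_Tset[OF X]
  finally show ?thesis by (simp add: algebra_simps)
qed



lemma moment:
  fixes M :: "int set" and c U :: real and X :: int
  assumes MX: "M \<subseteq> {1..X}" and c: "c \<noteq> 0" and U: "U \<ge> 0"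
  shows "\<exists>V. ((\<lambda>a. (norm (\<Sum>m\<in>M. ee (a * c * (of_int m)\<^sup>2)))^4) has_integral V) {0..U}
     \<and> V \<le> (U + harm (nat (2 * X\<^sup>2)) / (pi * \<bar>c\<bar>)) * ((real_of_int X)\<^sup>2 * (1 + 32 * harm (nat X)))"
proof -
  have finM: "finite M" using MX finite_subset by blast
  define A where "A = M \<times> M"
  have finA: "finite A" unfolding A_def using finM by simp
  define I where "I b = (if b = 0 then U else sin (b * U) / b)" for b :: real
  define bb where "bb p p' = 2 * pi * c * real_of_int (sq2 p - sq2 p')" for p p'
  have eqf: "(norm (\<Sum>m\<in>M. ee (a * c * (of_int m)\<^sup>2)))^4 = (\<Sum>p\<in>A. \<Sum>p'\<in>A. cos (bb p p' * a))" for a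
    unfolding S_fourth[OF finM] A_def bb_def by (simp add: algebra_simps)
  have HI: "((\<lambda>a. \<Sum>p\<in>A. \<Sum>p'\<in>A. cos (bb p p' * a)) has_integral (\<Sum>p\<in>A. \<Sum>p'\<in>A. I (bb p p'))) {0..U}"
    unfolding I_def by (intro has_integral_sum finA ballI cos_has_integral U)
  have Ile: "I (bb p p') \<le> kf U c (sq2 p - sq2 p')" for p p'
  proof -
    have "I (bb p p') \<le> (if bb p p' = 0 then U else 1 / \<bar>bb p p'\<bar>)"
      unfolding I_def by (rule cos_integral_bound[OF U])
    also have "\<dots> = kf U c (sq2 p - sq2 p')"
      using c by (simp add: kf_def bb_def abs_mult)
    finally show ?thesis .
  qed
  define K where "K = U + harm (nat (2 * X\<^sup>2)) / (pi * \<bar>c\<bar>)"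
  have sqA: "sq2 ` A \<subseteq> {0..2 * X\<^sup>2}"
  proof
    fix v assume "v \<in> sq2 ` A"
    then obtain m1 m2 where m: "m1 \<in> M" "m2 \<in> M" "v = m1^2 + m2^2" by (auto simp: A_def sq2_def)
    have "m1^2 \<le> X^2" "m2^2 \<le> X^2" using m MX by (auto intro!: power_mono)
    then show "v \<in> {0..2 * X\<^sup>2}" using m by auto
  qed
  have K0: "K \<ge> 0" unfolding K_def using U by (simp add: harm_nonneg)
  have "(\<Sum>p\<in>A. \<Sum>p'\<in>A. I (bb p p')) \<le> (\<Sum>p\<in>A. \<Sum>p'\<in>A. kf U c (sq2 p - sq2 p'))"
    using Ile by (intro sum_mono) auto
  also have "\<dots> \<le> K * (\<Sum>b\<in>A. real (card {a\<in>A. sq2 a = sq2 b}))"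
    unfolding K_def
    by (rule group_bound[of A "kf U c" sq2, OF finA kf_sym kf_nonneg[OF U]]) (rule K_bound[OF sqA _ c U])
  also have "(\<Sum>b\<in>A. real (card {a\<in>A. sq2 a = sq2 b})) \<le> (real_of_int X)\<^sup>2 * (1 + 32 * harm (nat X))"
  proof (cases "X \<ge> 0")
    case X: True
    have "(\<Sum>b\<in>A. card {a\<in>A. sq2 a = sq2 b}) = card (Sigma A (\<lambda>b. {a\<in>A. sq2 a = sq2 b}))"
      using finA by (subst card_SigmaI) auto
    also have "\<dots> \<le> card (quadset X)"
    proof (rule card_mono)
      show "finite (quadset X)" unfolding quadset_def BX_def by auto
      show "Sigma A (\<lambda>b. {a\<in>A. sq2 a = sq2 b}) \<subseteq> quadset X"
        using MX unfolding A_def quadset_def BX_def by auto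
    qed
    finally have "(\<Sum>b\<in>A. real (card {a\<in>A. sq2 a = sq2 b})) \<le> real (card (quadset X))"
      by (simp flip: of_nat_sum)
    also have "\<dots> \<le> (real_of_int X)\<^sup>2 * (1 + 32 * harm (nat X))" by (rule card_quad[OF X])
    finally show ?thesis .
  next
    case False
    then have "M = {}" using MX by auto
    then show ?thesis by (simp add: A_def harm_nonneg add_nonneg_nonneg)
  qed
  then have "K * (\<Sum>b\<in>A. real (card {a\<in>A. sq2 a = sq2 b})) \<le> K * ((real_of_int X)\<^sup>2 * (1 + 32 * harm (nat X)))"
    using K0 by (rule mult_left_mono)
  finally have "(\<Sum>p\<in>A. \<Sum>p'\<in>A. I (bb p p')) \<le> K * ((real_of_int X)\<^sup>2 * (1 + 32 * harm (nat X)))" .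
  then show ?thesis using HI unfolding eqf[symmetric] K_def by blast
qed



lemma xy_le: fixes x y :: real shows "x * y \<le> (x^2 + y^2) / 2"
proof -
  have "0 \<le> (x - y)^2" by simp
  also have "(x - y)^2 = x^2 + y^2 - 2 * (x * y)" by (simp add: power2_diff)
  finally show ?thesis by simp
qed

lemma amgm4:
  fixes a b c e :: real
  assumes "a \<ge> 0" "b \<ge> 0" "c \<ge> 0" "e \<ge> 0"
  shows "a * b * c * e \<le> (a^4 + b^4 + c^4 + e^4) / 4"
proof -
  have 1: "(a * b) * (c * e) \<le> ((a*b)^2 + (c*e)^2) / 2" by (rule xy_le)
  have 2: "(a*b)^2 \<le> (a^4 + b^4) / 2"
    using xy_le[of "a^2" "b^2"] by (simp add: power_mult_distrib power_mult[symmetric])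
  have 3: "(c*e)^2 \<le> (c^4 + e^4) / 2"
    using xy_le[of "c^2" "e^2"] by (simp add: power_mult_distrib power_mult[symmetric])
  show ?thesis using 1 2 3 by (simp add: algebra_simps)
qed

lemma chain_mono:
  fixes A :: "nat \<Rightarrow> real" and p :: "nat \<Rightarrow> nat" and d k l :: nat
  assumes "\<forall>i\<in>{1..<d}. A (p i) \<le> A (p (i + 1))"
  shows "1 \<le> k \<Longrightarrow> k \<le> l \<Longrightarrow> l \<le> d \<Longrightarrow> A (p k) \<le> A (p l)"
proof (induction l)
  case 0 then show ?case by simp
next
  case (Suc l)
  show ?case
  proof (cases "k = Suc l")
    case True then show ?thesis by simp
  next
    case False
    then have "k \<le> l" using Suc by simp
    then have "A (p k) \<le> A (p l)" using Suc by simp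
    also have "A (p l) \<le> A (p (l + 1))" using assms Suc \<open>k \<le> l\<close> by auto
    finally show ?thesis by simp
  qed
qed

lemma pointwise:
  fixes A :: "nat \<Rightarrow> real" and P Z :: real and d :: nat
  assumes d: "d \<ge> 5" and perm: "p permutes {1..d}"
    and nonneg: "\<And>j. j \<in> {1..d} \<Longrightarrow> 0 \<le> A j"
    and upper: "\<And>j. j \<in> {1..d} \<Longrightarrow> A j \<le> 2 * real d * P"
    and ord: "\<forall>i\<in>{1..<d}. A (p i) \<le> A (p (i + 1))"
    and P: "P > 0" and Z: "Z > 0"
    and notF: "i \<in> {1..d}" "\<not> (A (p i) > P * Z powr (- 1 / real (min i (d - 4))))"
  shows "(\<Prod>j\<in>{1..d}. A j) \<le> (2 * real d) ^ (d - 4) * P ^ (d - 4) / Z * (\<Sum>j\<in>{1..d}. (A j)^4)"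
proof -
  have pin: "p k \<in> {1..d}" if "k \<in> {1..d}" for k using permutes_in_image[OF perm] that by blast
  define m where "m = min i (d - 4)"
  have m1: "1 \<le> m" "m \<le> d - 4" "m \<le> i" using notF d unfolding m_def by auto
  define T where "T = P * Z powr (- 1 / real m)"
  have T0: "T \<ge> 0" unfolding T_def using P by simp
  have Ai: "A (p i) \<le> T" using notF unfolding T_def m_def by simp
  have "(\<Prod>j\<in>{1..d}. A j) = (\<Prod>k\<in>{1..d}. A (p k))"
    using prod.permute[OF perm, of A] by simp
  also have "\<dots> = (\<Prod>k\<in>{1..d-4} \<union> {d-3..d}. A (p k))"
    using d by (intro prod.cong) auto
  also have "(\<Prod>k\<in>{1..d-4} \<union> {d-3..d}. A (p k)) = (\<Prod>k\<in>{1..d-4}. A (p k)) * (\<Prod>k\<in>{d-3..d}. A (p k))"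
    by (rule prod.union_disjoint) auto
  finally have split: "(\<Prod>j\<in>{1..d}. A j) = (\<Prod>k\<in>{1..d-4}. A (p k)) * (\<Prod>k\<in>{d-3..d}. A (p k))" .
  define b where "b k = (if k \<le> m then T else 2 * real d * P)" for k
  have first: "(\<Prod>k\<in>{1..d-4}. A (p k)) \<le> (\<Prod>k\<in>{1..d-4}. b k)"
  proof (rule prod_mono)
    fix k assume k: "k \<in> {1..d-4}"
    have kd: "k \<in> {1..d}" using k by auto
    show "0 \<le> A (p k) \<and> A (p k) \<le> b k"
    proof
      show "0 \<le> A (p k)" using nonneg[OF pin[OF kd]] .
      show "A (p k) \<le> b k"
      proof (cases "k \<le> m")
        case True
        have "A (p k) \<le> A (p i)" using chain_mono[of d A p k i, OF ord] True m1 k notF(1) by auto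
        then show ?thesis using Ai True unfolding b_def by simp
      next
        case False then show ?thesis using upper[OF pin[OF kd]] unfolding b_def by simp
      qed
    qed
  qed
  have "(\<Prod>k\<in>{1..d-4}. b k) = (\<Prod>k\<in>{1..m}. b k) * (\<Prod>k\<in>{m+1..d-4}. b k)"
  proof -
    have "{1..d-4} = {1..m} \<union> {m+1..d-4}" using m1 by auto
    then show ?thesis by (simp add: prod.union_disjoint[symmetric] ivl_disj_int)
  qed
  also have "(\<Prod>k\<in>{1..m}. b k) = T ^ m" unfolding b_def by simp
  also have "(\<Prod>k\<in>{m+1..d-4}. b k) = (2 * real d * P) ^ (d - 4 - m)" unfolding b_def
    using m1 by simp
  also have "T ^ m = P ^ m / Z"
  proof -
    have "(Z powr (- 1 / real m)) ^ m = Z powr (- 1 / real m * real m)"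
      using Z by (simp add: powr_realpow[symmetric] powr_powr)
    also have "\<dots> = 1 / Z" using m1 Z by (simp add: powr_minus divide_inverse)
    finally show ?thesis unfolding T_def by (simp add: power_mult_distrib)
  qed
  finally have fb: "(\<Prod>k\<in>{1..d-4}. b k) = P ^ m / Z * (2 * real d * P) ^ (d - 4 - m)" .
  have "P ^ m / Z * (2 * real d * P) ^ (d - 4 - m) = (2 * real d) ^ (d - 4 - m) * P ^ (d - 4) / Z"
  proof -
    have "P ^ m * P ^ (d - 4 - m) = P ^ (d - 4)" using m1 by (simp flip: power_add)
    then show ?thesis by (simp add: power_mult_distrib field_simps)
  qed
  also have "\<dots> \<le> (2 * real d) ^ (d - 4) * P ^ (d - 4) / Z"
    using d P Z by (intro divide_right_mono mult_right_mono power_increasing) auto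
  finally have F1: "(\<Prod>k\<in>{1..d-4}. A (p k)) \<le> (2 * real d) ^ (d - 4) * P ^ (d - 4) / Z"
    using first fb by simp
  have "{d-3..d} = {d-3, d-2, d-1, d}" using d by auto
  then have "(\<Prod>k\<in>{d-3..d}. A (p k)) = A (p (d-3)) * A (p (d-2)) * A (p (d-1)) * A (p d)"
  proof -
    have n: "d-3 \<notin> {d-2, d-1, d}" "d-2 \<notin> {d-1, d}" "d-1 \<notin> {d}" using d by auto
    have eqs: "{d-3..d} = {d-3, d-2, d-1, d}" using d by auto
    have "(\<Prod>k\<in>{d-3, d-2, d-1, d}. A (p k)) = A (p (d-3)) * (\<Prod>k\<in>{d-2, d-1, d}. A (p k))"
      by (rule prod.insert) (use n in auto)
    also have "(\<Prod>k\<in>{d-2, d-1, d}. A (p k)) = A (p (d-2)) * (\<Prod>k\<in>{d-1, d}. A (p k))"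
      by (rule prod.insert) (use n in auto)
    also have "(\<Prod>k\<in>{d-1, d}. A (p k)) = A (p (d-1)) * A (p d)"
      using n by simp
    finally show ?thesis unfolding eqs by (simp add: mult.assoc)
  qed
  also have "\<dots> \<le> ((A (p (d-3)))^4 + (A (p (d-2)))^4 + (A (p (d-1)))^4 + (A (p d))^4) / 4"
    using d by (intro amgm4 nonneg pin) auto
  also have "\<dots> \<le> (\<Sum>j\<in>{1..d}. (A j)^4)"
  proof -
    have "(A (p k))^4 \<le> (\<Sum>j\<in>{1..d}. (A j)^4)" if "k \<in> {1..d}" for k
      by (rule member_le_sum) (use pin[OF that] in auto)
    then have "(A (p (d-3)))^4 \<le> (\<Sum>j\<in>{1..d}. (A j)^4)" "(A (p (d-2)))^4 \<le> (\<Sum>j\<in>{1..d}. (A j)^4)"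
      "(A (p (d-1)))^4 \<le> (\<Sum>j\<in>{1..d}. (A j)^4)" "(A (p d))^4 \<le> (\<Sum>j\<in>{1..d}. (A j)^4)"
      using d by auto
    then show ?thesis by simp
  qed
  finally have F2: "(\<Prod>k\<in>{d-3..d}. A (p k)) \<le> (\<Sum>j\<in>{1..d}. (A j)^4)" .
  have P1: "0 \<le> (\<Prod>k\<in>{1..d-4}. A (p k))" using nonneg pin by (intro prod_nonneg) auto
  have P2: "0 \<le> (\<Prod>k\<in>{d-3..d}. A (p k))" using nonneg pin d by (intro prod_nonneg) auto
  show ?thesis unfolding split using F1 F2 P1 P2 by (intro mult_mono) auto
qed



lemma harm_bound:
  fixes a P :: real and n k :: nat
  assumes n: "real n \<le> a * P ^ k" and a: "a \<ge> 1" and P: "P \<ge> exp 1"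
  shows "harm n \<le> (1 + ln a + real k) * ln P"
proof (cases "n = 0")
  case True
  have "0 \<le> ln a" using a by simp
  moreover have "0 \<le> ln P" using P exp_ge_add_one_self[of "1::real"] by (intro ln_ge_zero) linarith
  ultimately show ?thesis using True by (simp add: harm_def)
next
  case False
  have P0: "P > 0" using P by (meson exp_gt_zero order_less_le_trans)
  have lP: "ln P \<ge> 1" using P by (metis ln_exp ln_le_cancel_iff exp_gt_zero P0)
  have "harm n \<le> 1 + ln (real n)" using harm_le_ln[of n] False by auto
  also have "ln (real n) \<le> ln (a * P ^ k)" using n False by (intro ln_mono) auto
  also have "ln (a * P ^ k) = ln a + real k * ln P" using a P0 by (simp add: ln_mult ln_realpow)
  finally have "harm n \<le> 1 + ln a + real k * ln P" by simp
  also have "\<dots> \<le> (1 + ln a + real k) * ln P"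
  proof -
    have "0 \<le> 1 + ln a" using a by simp
    then have "(1 + ln a) * 1 \<le> (1 + ln a) * ln P" using lP by (intro mult_left_mono)
    then have "1 + ln a \<le> (1 + ln a) * ln P" by simp
    then show ?thesis by (simp add: algebra_simps)
  qed
  finally show ?thesis .
qed

definition Kd :: "nat \<Rightarrow> real" where
  "Kd d = 132 * (real d)\<^sup>2 * (2 + ln (2 * real d)) * (4 + ln (8 * (real d)\<^sup>2))"

lemma Sj_facts:
  fixes d :: nat and P qj :: real
  assumes d: "d \<ge> 1" and q: "\<bar>qj\<bar> \<ge> 1" and P: "P \<ge> exp 1" and sP: "sqrt \<bar>qj\<bar> \<le> P"
    and u: "ln P * ln P \<le> upar P"
  shows "\<And>a. sqrt \<bar>qj\<bar> * norm (Ssum d P qj a) \<le> 2 * real d * P"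
    and "\<exists>V. ((\<lambda>a. \<bar>qj\<bar>\<^sup>2 * (norm (Ssum d P qj a))^4) has_integral V) {0..upar P}
           \<and> V \<le> Kd d * upar P * \<bar>qj\<bar> * P\<^sup>2 * ln P"
proof -
  define qa where "qa = \<bar>qj\<bar>"
  have qa1: "qa \<ge> 1" using q qa_def by simp
  have sq1: "sqrt qa \<ge> 1" using qa1 by simp
  have P0: "P > 0" using P by (meson exp_gt_zero order_less_le_trans)
  have lP: "ln P \<ge> 1" using P by (metis ln_exp ln_le_cancel_iff exp_gt_zero P0)
  define M where "M = {m::int. P < sqrt qa * of_int m \<and> sqrt qa * of_int m < 2 * real d * P}"
  define X where "X = \<lfloor>2 * real d * P / sqrt qa\<rfloor>"
  have Sdef: "Ssum d P qj a = (\<Sum>m\<in>M. ee (a * qj * (of_int m)\<^sup>2))" for a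
    unfolding Ssum_def M_def qa_def by simp
  have MX: "M \<subseteq> {1..X}"
  proof
    fix m assume m: "m \<in> M"
    then have m1: "P < sqrt qa * of_int m" "sqrt qa * of_int m < 2 * real d * P" unfolding M_def by auto
    have "0 < sqrt qa * of_int m" using m1 P0 by linarith
    then have "of_int m > (0::real)" using sq1 by (simp add: zero_less_mult_iff)
    then have "m \<ge> 1" by simp
    moreover have "of_int m \<le> 2 * real d * P / sqrt qa" using m1 sq1 by (simp add: field_simps)
    then have "m \<le> X" unfolding X_def by (simp add: le_floor_iff)
    ultimately show "m \<in> {1..X}" by simp
  qed
  have finM: "finite M" using MX finite_subset by blast
  have Xle: "real_of_int X \<le> 2 * real d * P / sqrt qa" unfolding X_def by (rule of_int_floor_le)
  have X0: "X \<ge> 0" unfolding X_def using P0 sq1 by simp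
  have Xle2: "real_of_int X \<le> 2 * real d * P"
  proof -
    have "2 * real d * P / sqrt qa \<le> 2 * real d * P / 1" using sq1 P0 by (intro divide_left_mono) auto
    then show ?thesis using Xle by linarith
  qed
  show "sqrt \<bar>qj\<bar> * norm (Ssum d P qj a) \<le> 2 * real d * P" for a
  proof -
    have "norm (Ssum d P qj a) \<le> (\<Sum>m\<in>M. norm (ee (a * qj * (of_int m)\<^sup>2)))"
      unfolding Sdef by (rule norm_sum)
    also have "\<dots> = real (card M)" by (simp add: ee_def norm_exp_eq_Re)
    also have "card M \<le> card {1..X}" using MX by (intro card_mono) auto
    then have "real (card M) \<le> real_of_int X" using X0 by simp
    finally have "norm (Ssum d P qj a) \<le> real_of_int X" by simp
    then have "sqrt qa * norm (Ssum d P qj a) \<le> sqrt qa * (2 * real d * P / sqrt qa)"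
      using Xle sq1 by (intro mult_left_mono) auto
    also have "\<dots> = 2 * real d * P" using sq1 by simp
    finally show ?thesis unfolding qa_def .
  qed
  have c0: "qj \<noteq> 0" using q by auto
  have U0: "upar P \<ge> 0" unfolding upar_def by simp
  obtain V0 where V0: "((\<lambda>a. (norm (\<Sum>m\<in>M. ee (a * qj * (of_int m)\<^sup>2)))^4) has_integral V0) {0..upar P}"
    "V0 \<le> (upar P + harm (nat (2 * X\<^sup>2)) / (pi * \<bar>qj\<bar>)) * ((real_of_int X)\<^sup>2 * (1 + 32 * harm (nat X)))"
    using moment[OF MX c0 U0] by blast
  define c1 where "c1 = 2 + ln (2 * real d)"
  define c2 where "c2 = 3 + ln (8 * (real d)\<^sup>2)"
  have d1: "real d \<ge> 1" using d by simp
  have c1p: "c1 \<ge> 1" unfolding c1_def using d1 by simp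
  have c2p: "c2 \<ge> 0"
  proof -
    have "(real d)^2 \<ge> 1" using one_le_power[OF d1] .
    then have "ln (8 * (real d)\<^sup>2) \<ge> 0" by (intro ln_ge_zero) linarith
    then show ?thesis unfolding c2_def by simp
  qed
  have h1: "harm (nat X) \<le> c1 * ln P"
  proof -
    have "real (nat X) \<le> (2 * real d) * P ^ 1" using Xle2 X0 by simp
    from harm_bound[OF this _ P] d1 show ?thesis unfolding c1_def by (simp add: add_ac)
  qed
  have h2: "harm (nat (2 * X\<^sup>2)) \<le> c2 * ln P"
  proof -
    have "real_of_int X * real_of_int X \<le> (2 * real d * P) * (2 * real d * P)"
      using Xle2 X0 P0 by (intro mult_mono) auto
    then have n2: "real (nat (2 * X\<^sup>2)) \<le> (8 * (real d)\<^sup>2) * P ^ 2" using X0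
      by (simp add: power2_eq_square algebra_simps)
    have e8: "8 * (real d)^2 \<ge> 1" using one_le_power[OF d1, of 2] by linarith
    from harm_bound[OF n2 e8 P] have "harm (nat (2 * X\<^sup>2)) \<le> (1 + ln (8 * (real d)\<^sup>2) + 2) * ln P"
      by simp
    then show ?thesis unfolding c2_def by (simp add: add_ac)
  qed
  have X2: "(real_of_int X)\<^sup>2 \<le> 4 * (real d)\<^sup>2 * P\<^sup>2 / qa"
  proof -
    have "(real_of_int X)\<^sup>2 \<le> (2 * real d * P / sqrt qa)\<^sup>2" using Xle X0 by (intro power_mono) auto
    also have "\<dots> = 4 * (real d)\<^sup>2 * P\<^sup>2 / qa" using qa1 by (simp add: power_divide power_mult_distrib)
    finally show ?thesis .
  qed
  have h2n: "harm (nat (2 * X\<^sup>2)) \<ge> (0::real)" by (rule harm_nonneg)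
  have h1n: "harm (nat X) \<ge> (0::real)" by (rule harm_nonneg)
  have lu: "ln P \<le> upar P"
  proof -
    have "ln P * 1 \<le> ln P * ln P" using lP by (intro mult_left_mono) auto
    then show ?thesis using u by simp
  qed
  have pi1: "pi \<ge> 1" using pi_gt3 by simp
  have A1: "upar P + harm (nat (2 * X\<^sup>2)) / (pi * \<bar>qj\<bar>) \<le> (1 + c2) * upar P"
  proof -
    have "1 * 1 \<le> pi * \<bar>qj\<bar>" using pi1 q by (intro mult_mono) auto
    then have pq: "1 \<le> pi * \<bar>qj\<bar>" by simp
    have "harm (nat (2 * X\<^sup>2)) / (pi * \<bar>qj\<bar>) \<le> harm (nat (2 * X\<^sup>2)) / 1"
      using pq h2n by (intro divide_left_mono) auto
    then have "harm (nat (2 * X\<^sup>2)) / (pi * \<bar>qj\<bar>) \<le> harm (nat (2 * X\<^sup>2))" by simp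
    also have "\<dots> \<le> c2 * ln P" by (rule h2)
    also have "\<dots> \<le> c2 * upar P" using lu c2p by (rule mult_left_mono)
    finally show ?thesis by (simp add: algebra_simps)
  qed
  have A1n: "0 \<le> upar P + harm (nat (2 * X\<^sup>2)) / (pi * \<bar>qj\<bar>)" using U0 h2n by simp
  have B1: "(real_of_int X)\<^sup>2 * (1 + 32 * harm (nat X)) \<le> 4 * (real d)\<^sup>2 * P\<^sup>2 / qa * (33 * c1 * ln P)"
  proof (rule mult_mono)
    show "(real_of_int X)\<^sup>2 \<le> 4 * (real d)\<^sup>2 * P\<^sup>2 / qa" by (rule X2)
    have "1 * 1 \<le> c1 * ln P" using c1p lP by (intro mult_mono) auto
    then show "1 + 32 * harm (nat X) \<le> 33 * c1 * ln P" using h1 by simp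
  qed (use qa1 h1n in auto)
  have V0b: "V0 \<le> ((1 + c2) * upar P) * (4 * (real d)\<^sup>2 * P\<^sup>2 / qa * (33 * c1 * ln P))"
  proof -
    have "(upar P + harm (nat (2 * X\<^sup>2)) / (pi * \<bar>qj\<bar>)) * ((real_of_int X)\<^sup>2 * (1 + 32 * harm (nat X)))
        \<le> ((1 + c2) * upar P) * (4 * (real d)\<^sup>2 * P\<^sup>2 / qa * (33 * c1 * ln P))"
      by (rule mult_mono[OF A1 B1]) (use c2p U0 h1n in auto)
    then show ?thesis using V0(2) by linarith
  qed
  have "qa\<^sup>2 * V0 \<le> qa\<^sup>2 * (((1 + c2) * upar P) * (4 * (real d)\<^sup>2 * P\<^sup>2 / qa * (33 * c1 * ln P)))"
    using V0b by (intro mult_left_mono) auto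
  also have "\<dots> = Kd d * upar P * qa * P\<^sup>2 * ln P"
    using qa1 unfolding Kd_def c1_def c2_def by (simp add: field_simps power2_eq_square)
  finally have fin: "qa\<^sup>2 * V0 \<le> Kd d * upar P * qa * P\<^sup>2 * ln P" .
  have "((\<lambda>a. \<bar>qj\<bar>\<^sup>2 * (norm (Ssum d P qj a))^4) has_integral (qa\<^sup>2 * V0)) {0..upar P}"
    unfolding Sdef qa_def by (rule has_integral_mult_right[OF V0(1)])
  then show "\<exists>V. ((\<lambda>a. \<bar>qj\<bar>\<^sup>2 * (norm (Ssum d P qj a))^4) has_integral V) {0..upar P}
           \<and> V \<le> Kd d * upar P * \<bar>qj\<bar> * P\<^sup>2 * ln P"
    using fin unfolding qa_def by blast
qed



definition Cconst :: "nat \<Rightarrow> real" where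
  "Cconst d = (2 * real d) ^ (d - 4) * real d * Kd d"

lemma Kd_nonneg: "d \<ge> 1 \<Longrightarrow> Kd d \<ge> 0"
proof -
  assume d: "d \<ge> 1"
  then have d1: "real d \<ge> 1" by simp
  have a: "ln (2 * real d) \<ge> 0" using d1 by (intro ln_ge_zero) linarith
  have "(real d)^2 \<ge> 1" using one_le_power[OF d1] .
  then have b: "ln (8 * (real d)\<^sup>2) \<ge> 0" by (intro ln_ge_zero) linarith
  show ?thesis unfolding Kd_def using a b by simp
qed

lemma core:
  fixes d :: nat and q :: "nat \<Rightarrow> real" and p :: "nat \<Rightarrow> nat" and P qm Q :: real and E :: "real set"
  assumes d: "d \<ge> 5" and q1: "\<forall>j\<in>{1..d}. 1 \<le> \<bar>q j\<bar>" and perm: "p permutes {1..d}"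
    and P: "exp 1 \<le> P" and sP: "\<forall>j\<in>{1..d}. sqrt \<bar>q j\<bar> \<le> P" and u: "ln P * ln P \<le> upar P"
    and qm: "\<forall>j\<in>{1..d}. \<bar>q j\<bar> \<le> qm" and qm1: "1 \<le> qm" and Q: "Q = (\<Prod>j\<in>{1..d}. \<bar>q j\<bar>)"
    and E: "\<And>a. a \<in> E \<Longrightarrow> 0 \<le> a \<and> a \<le> upar P
        \<and> (\<forall>i\<in>{1..<d}. sqrt \<bar>q (p i)\<bar> * norm (Ssum d P (q (p i)) a) \<le> sqrt \<bar>q (p (i + 1))\<bar> * norm (Ssum d P (q (p (i + 1))) a))
        \<and> (\<exists>i\<in>{1..d}. \<not> (sqrt \<bar>q (p i)\<bar> * norm (Ssum d P (q (p i)) a) > P * ((upar P)\<^sup>2 * qm) powr (- 1 / real (min i (d - 4)))))"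
  shows "integral E (\<lambda>a. norm (\<Prod>j\<in>{1..d}. Ssum d P (q j) a)) \<le> Cconst d * Q powr (- 1 / 2) * P ^ (d - 2) / ln P"
proof -
  define u where "u = upar P"
  define l where "l = ln P"
  have P0: "P > 0" using P by (meson exp_gt_zero order_less_le_trans)
  have l1: "l \<ge> 1" unfolding l_def using P by (metis ln_exp ln_le_cancel_iff exp_gt_zero P0)
  have u0: "u > 0" using u l1 unfolding u_def l_def by (smt (verit) mult_le_cancel_left1)
  define Z where "Z = u\<^sup>2 * qm"
  have Z0: "Z > 0" unfolding Z_def using u0 qm1 by simp
  define S where "S j a = Ssum d P (q j) a" for j a
  define A where "A j a = sqrt \<bar>q j\<bar> * norm (S j a)" for j a
  define G where "G a = (\<Sum>j\<in>{1..d}. \<bar>q j\<bar>\<^sup>2 * (norm (S j a))^4)" for a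
  define V where "V j = integral {0..u} (\<lambda>a. \<bar>q j\<bar>\<^sup>2 * (norm (S j a))^4)" for j
  have d1: "d \<ge> 1" using d by simp
  have Vj: "((\<lambda>a. \<bar>q j\<bar>\<^sup>2 * (norm (S j a))^4) has_integral V j) {0..u} \<and> V j \<le> Kd d * u * qm * P\<^sup>2 * l"
    if j: "j \<in> {1..d}" for j
  proof -
    obtain W where W: "((\<lambda>a. \<bar>q j\<bar>\<^sup>2 * (norm (S j a))^4) has_integral W) {0..u}"
      "W \<le> Kd d * u * \<bar>q j\<bar> * P\<^sup>2 * l"
      using Sj_facts(2)[OF d1 _ P _ u, of "q j"] q1 sP j unfolding S_def u_def l_def by blast
    have VW: "V j = W" unfolding V_def using W(1) by (rule integral_unique)
    have Kd0: "Kd d \<ge> 0" using Kd_nonneg d1 by simp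
    have "Kd d * u * \<bar>q j\<bar> * P\<^sup>2 * l \<le> Kd d * u * qm * P\<^sup>2 * l"
      using qm j Kd0 u0 P0 l1 by (intro mult_right_mono mult_left_mono) auto
    then show ?thesis using W VW by simp
  qed
  have Gint: "(G has_integral (\<Sum>j\<in>{1..d}. V j)) {0..u}"
    unfolding G_def by (rule has_integral_sum) (use Vj in auto)
  have Vsum: "(\<Sum>j\<in>{1..d}. V j) \<le> real d * (Kd d * u * qm * P\<^sup>2 * l)"
  proof -
    have "(\<Sum>j\<in>{1..d}. V j) \<le> (\<Sum>j\<in>{1..d}. Kd d * u * qm * P\<^sup>2 * l)" using Vj by (intro sum_mono) auto
    then show ?thesis by simp
  qed
  define w where "w = Q powr (- 1 / 2)"
  have "\<forall>j\<in>{1..d}. \<bar>q j\<bar> > 0" using q1 by fastforce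
  then have "Q > 0" unfolding Q by (intro prod_pos) auto
  then have w0: "w > 0" unfolding w_def by simp
  define B where "B = w * ((2 * real d) ^ (d - 4) * P ^ (d - 4) / Z)"
  have B0: "B \<ge> 0" unfolding B_def using w0 P0 Z0 by simp
  have fA: "norm (\<Prod>j\<in>{1..d}. S j a) = w * (\<Prod>j\<in>{1..d}. A j a)" for a
  proof -
    have "norm (\<Prod>j\<in>{1..d}. S j a) = (\<Prod>j\<in>{1..d}. norm (S j a))" by (simp add: prod_norm)
    also have "\<dots> = (\<Prod>j\<in>{1..d}. \<bar>q j\<bar> powr (- 1 / 2) * A j a)"
    proof (rule prod.cong)
      fix j assume j: "j \<in> {1..d}"
      have qj: "\<bar>q j\<bar> > 0" using q1 j by fastforce
      have "\<bar>q j\<bar> powr (- 1 / 2) = \<bar>q j\<bar> powr (- (1 / 2))" by simp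
      also have "\<dots> = inverse (\<bar>q j\<bar> powr (1 / 2))" by (rule powr_minus)
      also have "\<dots> = inverse (sqrt \<bar>q j\<bar>)" using qj by (simp add: powr_half_sqrt)
      finally have "\<bar>q j\<bar> powr (- 1 / 2) * sqrt \<bar>q j\<bar> = inverse (sqrt \<bar>q j\<bar>) * sqrt \<bar>q j\<bar>" by simp
      also have "\<dots> = 1" using qj by simp
      finally have "\<bar>q j\<bar> powr (- 1 / 2) * sqrt \<bar>q j\<bar> = 1" .
      then show "norm (S j a) = \<bar>q j\<bar> powr (- 1 / 2) * A j a" unfolding A_def by (metis mult.assoc mult_1)
    qed simp
    also have "\<dots> = (\<Prod>j\<in>{1..d}. \<bar>q j\<bar> powr (- 1 / 2)) * (\<Prod>j\<in>{1..d}. A j a)"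
      by (simp add: prod.distrib)
    also have "(\<Prod>j\<in>{1..d}. \<bar>q j\<bar> powr (- 1 / 2)) = w" unfolding w_def Q by (simp add: prod_powr_distrib)
    finally show ?thesis .
  qed
  have A4: "(A j a)^4 = \<bar>q j\<bar>\<^sup>2 * (norm (S j a))^4" for j a
  proof -
    have p4: "\<And>x::real. x^4 = (x^2)^2" by (simp flip: power_mult)
    have "(sqrt \<bar>q j\<bar>)^4 = ((sqrt \<bar>q j\<bar>)^2)^2" by (rule p4)
    also have "\<dots> = \<bar>q j\<bar>\<^sup>2" by simp
    finally have "(sqrt \<bar>q j\<bar>)^4 = \<bar>q j\<bar>\<^sup>2" .
    then show ?thesis unfolding A_def by (simp add: power_mult_distrib)
  qed
  have pw: "norm (\<Prod>j\<in>{1..d}. S j a) \<le> B * G a" if a: "a \<in> E" for a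
  proof -
    have Ea: "\<forall>i\<in>{1..<d}. A (p i) a \<le> A (p (i + 1)) a"
      "\<exists>i\<in>{1..d}. \<not> (A (p i) a > P * Z powr (- 1 / real (min i (d - 4))))"
      using E[OF a] unfolding A_def S_def Z_def u_def by auto
    then obtain i where i: "i \<in> {1..d}" "\<not> (A (p i) a > P * Z powr (- 1 / real (min i (d - 4))))" by blast
    have "(\<Prod>j\<in>{1..d}. A j a) \<le> (2 * real d) ^ (d - 4) * P ^ (d - 4) / Z * (\<Sum>j\<in>{1..d}. (A j a)^4)"
    proof (rule pointwise[OF d perm _ _ Ea(1) P0 Z0 i])
      show "0 \<le> A j a" for j unfolding A_def by simp
      show "A j a \<le> 2 * real d * P" if "j \<in> {1..d}" for j
        unfolding A_def S_def using Sj_facts(1)[OF d1 _ P _ u, of "q j"] q1 sP that by auto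
    qed
    then have "w * (\<Prod>j\<in>{1..d}. A j a) \<le> w * ((2 * real d) ^ (d - 4) * P ^ (d - 4) / Z * (\<Sum>j\<in>{1..d}. (A j a)^4))"
      using w0 by (intro mult_left_mono) auto
    then show ?thesis unfolding fA B_def G_def A4 by (simp add: mult.assoc)
  qed
  have G0: "G a \<ge> 0" for a unfolding G_def by (intro sum_nonneg) auto
  have Eu: "E \<subseteq> {0..u}" using E unfolding u_def by auto
  have main: "integral E (\<lambda>a. norm (\<Prod>j\<in>{1..d}. S j a)) \<le> B * (\<Sum>j\<in>{1..d}. V j)"
  proof (cases "(\<lambda>a. norm (\<Prod>j\<in>{1..d}. S j a)) integrable_on E")
    case True
    have BG: "((\<lambda>a. B * G a) has_integral (B * (\<Sum>j\<in>{1..d}. V j))) {0..u}"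
      by (rule has_integral_mult_right[OF Gint])
    have "integral E (\<lambda>a. norm (\<Prod>j\<in>{1..d}. S j a))
        = integral UNIV (\<lambda>x. if x \<in> E then norm (\<Prod>j\<in>{1..d}. S j x) else 0)"
      by (simp add: integral_restrict_UNIV)
    also have "\<dots> \<le> integral UNIV (\<lambda>x. if x \<in> {0..u} then B * G x else 0)"
    proof (rule integral_le)
      show "(\<lambda>x. if x \<in> E then norm (\<Prod>j\<in>{1..d}. S j x) else 0) integrable_on UNIV"
        using True by (simp add: integrable_restrict_UNIV)
      show "(\<lambda>x. if x \<in> {0..u} then B * G x else 0) integrable_on UNIV"
        using integrable_restrict_UNIV[THEN iffD2, OF has_integral_integrable[OF BG]] .
      fix x show "(if x \<in> E then norm (\<Prod>j\<in>{1..d}. S j x) else 0) \<le> (if x \<in> {0..u} then B * G x else 0)"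
        using pw Eu B0 G0 by auto
    qed
    also have "\<dots> = B * (\<Sum>j\<in>{1..d}. V j)"
      using integral_restrict_UNIV[of "{0..u}" "\<lambda>a. B * G a"] integral_unique[OF BG] by simp
    finally show ?thesis .
  next
    case False
    then have "integral E (\<lambda>a. norm (\<Prod>j\<in>{1..d}. S j a)) = 0" by (rule not_integrable_integral)
    moreover have "(\<Sum>j\<in>{1..d}. V j) \<ge> 0"
    proof (rule sum_nonneg)
      fix j assume j: "j \<in> {1..d}"
      have "((\<lambda>a. \<bar>q j\<bar>\<^sup>2 * (norm (S j a))^4) has_integral V j) {0..u}" using Vj[OF j] by blast
      then show "V j \<ge> 0" by (rule has_integral_nonneg) auto
    qed
    ultimately show ?thesis using B0 by simp
  qed
  also have "B * (\<Sum>j\<in>{1..d}. V j) \<le> B * (real d * (Kd d * u * qm * P\<^sup>2 * l))"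
    using Vsum B0 by (rule mult_left_mono)
  also have "\<dots> = w * Cconst d * P ^ (d - 2) * (l / u)"
  proof -
    have "d - 4 + 2 = d - 2" using d by simp
    then have e1: "P ^ (d - 4) * P\<^sup>2 = P ^ (d - 2)" by (metis power_add)
    have e2: "u * qm * l / Z = l / u" unfolding Z_def using u0 qm1 by (simp add: power2_eq_square)
    have "B * (real d * (Kd d * u * qm * P\<^sup>2 * l))
        = (w * ((2 * real d) ^ (d - 4) * real d * Kd d)) * (P ^ (d - 4) * P\<^sup>2) * (u * qm * l / Z)"
      unfolding B_def by (simp add: mult_ac)
    also have "\<dots> = w * Cconst d * P ^ (d - 2) * (l / u)" unfolding e1 e2 Cconst_def by simp
    finally show ?thesis .
  qed
  also have "\<dots> \<le> w * Cconst d * P ^ (d - 2) * (1 / l)"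
  proof (rule mult_left_mono)
    show "l / u \<le> 1 / l" using u l1 u0 unfolding u_def l_def by (simp add: field_simps)
    have "Cconst d \<ge> 0" unfolding Cconst_def using Kd_nonneg[OF d1] by simp
    then show "0 \<le> w * Cconst d * P ^ (d - 2)" using w0 P0 by simp
  qed
  also have "w * Cconst d * P ^ (d - 2) * (1 / l) = Cconst d * Q powr (- 1 / 2) * P ^ (d - 2) / ln P"
    unfolding w_def l_def by simp
  finally show ?thesis unfolding S_def .
qed



lemma beta_nonneg:
  assumes r: "r \<ge> 1" and s: "s \<ge> 1" and rs: "r + s \<ge> 5"
  shows "betapar r s \<ge> 0"
proof -
  define r' where "r' = max r s"
  define s' where "s' = min r s"
  have s1: "s' \<ge> 1" "r' \<ge> s'" "r' + s' \<ge> 5" using r s rs unfolding r'_def s'_def by auto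
  have b: "betapar r s = (if r' \<ge> s' + 3 then real r' / (2 * real s')
      else if r' = s' + 1 \<or> r' = s' + 2 then (real s' + 2) / (2 * (real s' - 1))
      else (real s' + 1) / (2 * (real s' - 2)))"
    unfolding betapar_def Let_def r'_def s'_def by simp
  show ?thesis
  proof (cases "r' \<ge> s' + 3")
    case True then show ?thesis unfolding b by simp
  next
    case F1: False
    show ?thesis
    proof (cases "r' = s' + 1 \<or> r' = s' + 2")
      case True
      have "real s' - 1 \<ge> 0" using s1 by simp
      then show ?thesis using F1 True unfolding b by (simp add: divide_nonneg_nonneg)
    next
      case False
      then have "r' = s'" using F1 s1 by auto
      then have "s' \<ge> 3" using s1 by auto
      then have "real s' - 2 \<ge> 0" by simp
      then show ?thesis using F1 False unfolding b by (simp add: divide_nonneg_nonneg)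
    qed
  qed
qed

lemma P_facts:
  fixes Cd qm \<beta> P :: real
  assumes Cd: "Cd \<ge> 1" and qm: "qm \<ge> exp (exp 1)" and b: "\<beta> \<ge> 0" and P: "P = Ppar d (Hpar Cd qm \<beta>)"
  shows "exp 1 \<le> P" "sqrt qm \<le> P" "ln P * ln P \<le> upar P"
proof -
  define H where "H = Hpar Cd qm \<beta>"
  have e2: "exp (1::real) \<ge> 2" using exp_ge_add_one_self[of "1::real"] by simp
  have qm1: "qm \<ge> 1" using qm by (meson exp_ge_add_one_self one_le_exp_iff order_trans exp_ge_zero
      add_increasing2 exp_gt_zero less_imp_le)
  have lq: "ln qm \<ge> exp 1" using qm by (metis exp_gt_zero ln_exp ln_le_cancel_iff order_less_le_trans)
  have "qm powr (1/2) \<le> qm powr (1/2 + \<beta>)" using qm1 b by (intro powr_mono) auto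
  also have "\<dots> \<le> Cd * qm powr (1/2 + \<beta>)" using Cd by (simp add: mult_le_cancel_right1)
  finally have Hs: "sqrt qm \<le> H" unfolding H_def Hpar_def using qm1 by (simp add: powr_half_sqrt)
  have sq0: "sqrt qm > 0" using qm1 by simp
  have H0: "H > 0" using Hs sq0 by linarith
  have "ln (sqrt qm) = ln qm / 2" using qm1 by (simp add: ln_sqrt)
  then have "ln (sqrt qm) \<ge> 1" using lq e2 by simp
  moreover have "ln (sqrt qm) \<le> ln H" by (rule ln_mono[OF Hs sq0])
  ultimately have lH: "ln H \<ge> 1" by linarith
  have "ln (ln H) \<ge> 0" using lH by simp
  then have "10 * (real d)\<^sup>2 / ln (ln H) \<ge> 0" by simp
  then have ex: "(1 + 10 * (real d)\<^sup>2 / ln (ln H)) * ln H \<ge> ln H"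
    using lH by (simp add: algebra_simps)
  have PH: "P = exp ((1 + 10 * (real d)\<^sup>2 / ln (ln H)) * ln H)" unfolding P Ppar_def H_def ..
  have "H \<le> P" unfolding PH using ex H0 by (metis exp_ln exp_le_cancel_iff)
  then show "sqrt qm \<le> P" using Hs by linarith
  have ex1: "1 \<le> (1 + 10 * (real d)\<^sup>2 / ln (ln H)) * ln H" using ex lH by linarith
  then show "exp 1 \<le> P" unfolding PH by simp
  have P0: "P > 0" unfolding PH by simp
  have lP: "ln P \<ge> 0" using ex1 unfolding PH by simp
  have "ln P \<le> ln (P + exp 1)" using P0 by (intro ln_mono) auto
  then have "ln P * ln P \<le> ln (P + exp 1) * ln (P + exp 1)" using lP by (intro mult_mono) auto
  then show "ln P * ln P \<le> upar P" unfolding upar_def by (simp add: power2_eq_square)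
qed

theorem lemma2p10:
  fixes d :: nat and Cd :: real
  assumes "d \<ge> 5" and "Cd \<ge> 1"
  shows "\<exists>C::real. \<forall>(q::nat \<Rightarrow> real) (\<pi>::nat \<Rightarrow> nat).
    (\<forall>i\<in>{1..d}. \<bar>q i\<bar> \<ge> exp (exp 1)) \<and>
    card {i\<in>{1..d}. q i > 0} \<ge> 1 \<and> card {i\<in>{1..d}. q i < 0} \<ge> 1 \<and>
    \<pi> permutes {1..d} \<longrightarrow>
    (let r = card {i\<in>{1..d}. q i > 0};
         s = card {i\<in>{1..d}. q i < 0};
         q0 = Min ((\<lambda>j. \<bar>q j\<bar>) ` {1..d});
         qm = Max ((\<lambda>j. \<bar>q j\<bar>) ` {1..d});
         Q = (\<Prod>j\<in>{1..d}. \<bar>q j\<bar>);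
         P = Ppar d (Hpar Cd qm (betapar r s));
         S = (\<lambda>j \<alpha>. Ssum d P (q j) \<alpha>);
         A = (\<lambda>j \<alpha>. sqrt \<bar>q j\<bar> * norm (S j \<alpha>));
         J = {\<alpha>::real. 0 < \<alpha> \<and> 1 / (8 * real d * P * sqrt q0) < \<alpha> \<and> \<alpha> < upar P};
         J\<pi> = {\<alpha>\<in>J. \<forall>i\<in>{1..<d}. A (\<pi> i) \<alpha> \<le> A (\<pi> (i + 1)) \<alpha>};
         F = {\<alpha>\<in>J\<pi>. \<forall>i\<in>{1..d}.
                A (\<pi> i) \<alpha> > P * ((upar P)\<^sup>2 * qm) powr (- 1 / real (min i (d - 4)))}
     in integral (J\<pi> - F) (\<lambda>\<alpha>. norm (\<Prod>j\<in>{1..d}. S j \<alpha>))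
          \<le> C * Q powr (- 1 / 2) * P ^ (d - 2) / ln P)"
proof (intro exI[of _ "Cconst d"] allI impI)
  fix q :: "nat \<Rightarrow> real" and \<pi> :: "nat \<Rightarrow> nat"
  assume H: "(\<forall>i\<in>{1..d}. \<bar>q i\<bar> \<ge> exp (exp 1)) \<and>
    card {i\<in>{1..d}. q i > 0} \<ge> 1 \<and> card {i\<in>{1..d}. q i < 0} \<ge> 1 \<and>
    \<pi> permutes {1..d}"
  have d: "d \<ge> 5" and Cd: "Cd \<ge> 1" using assms by auto
  have qe: "\<forall>i\<in>{1..d}. \<bar>q i\<bar> \<ge> exp (exp 1)" and perm: "\<pi> permutes {1..d}"
    and r1: "card {i\<in>{1..d}. q i > 0} \<ge> 1" and s1: "card {i\<in>{1..d}. q i < 0} \<ge> 1" using H by auto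
  have ee1: "exp (exp (1::real)) \<ge> 1" by simp
  have q1: "\<forall>j\<in>{1..d}. 1 \<le> \<bar>q j\<bar>" using qe ee1 order_trans by blast
  define qm where "qm = Max ((\<lambda>j. \<bar>q j\<bar>) ` {1..d})"
  have qmj: "\<forall>j\<in>{1..d}. \<bar>q j\<bar> \<le> qm" unfolding qm_def by (auto intro: Max_ge)
  have "1 \<in> {1..d}" using d by simp
  then have qmE: "qm \<ge> exp (exp 1)" using qmj qe by (meson order_trans)
  have qm1: "qm \<ge> 1" using qmE ee1 by linarith
  have rs: "card {i\<in>{1..d}. q i > 0} + card {i\<in>{1..d}. q i < 0} = d"
  proof -
    have "{i\<in>{1..d}. q i > 0} \<union> {i\<in>{1..d}. q i < 0} = {1..d}"
      using q1 by (auto simp: neq_iff)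
    then have "card ({i\<in>{1..d}. q i > 0} \<union> {i\<in>{1..d}. q i < 0}) = d" by simp
    moreover have "card ({i\<in>{1..d}. q i > 0} \<union> {i\<in>{1..d}. q i < 0})
        = card {i\<in>{1..d}. q i > 0} + card {i\<in>{1..d}. q i < 0}"
      by (rule card_Un_disjoint) auto
    ultimately show ?thesis by simp
  qed
  have b0: "betapar (card {i\<in>{1..d}. q i > 0}) (card {i\<in>{1..d}. q i < 0}) \<ge> 0"
    using beta_nonneg[OF r1 s1] rs d by simp
  define P where "P = Ppar d (Hpar Cd qm (betapar (card {i\<in>{1..d}. q i > 0}) (card {i\<in>{1..d}. q i < 0})))"
  note PF = P_facts[OF Cd qmE b0 P_def]
  have sP: "\<forall>j\<in>{1..d}. sqrt \<bar>q j\<bar> \<le> P" using qmj PF(2) by (meson real_sqrt_le_iff order_trans)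
  show "let r = card {i\<in>{1..d}. q i > 0};
         s = card {i\<in>{1..d}. q i < 0};
         q0 = Min ((\<lambda>j. \<bar>q j\<bar>) ` {1..d});
         qm = Max ((\<lambda>j. \<bar>q j\<bar>) ` {1..d});
         Q = (\<Prod>j\<in>{1..d}. \<bar>q j\<bar>);
         P = Ppar d (Hpar Cd qm (betapar r s));
         S = (\<lambda>j \<alpha>. Ssum d P (q j) \<alpha>);
         A = (\<lambda>j \<alpha>. sqrt \<bar>q j\<bar> * norm (S j \<alpha>));
         J = {\<alpha>::real. 0 < \<alpha> \<and> 1 / (8 * real d * P * sqrt q0) < \<alpha> \<and> \<alpha> < upar P};
         J\<pi> = {\<alpha>\<in>J. \<forall>i\<in>{1..<d}. A (\<pi> i) \<alpha> \<le> A (\<pi> (i + 1)) \<alpha>};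
         F = {\<alpha>\<in>J\<pi>. \<forall>i\<in>{1..d}.
                A (\<pi> i) \<alpha> > P * ((upar P)\<^sup>2 * qm) powr (- 1 / real (min i (d - 4)))}
     in integral (J\<pi> - F) (\<lambda>\<alpha>. norm (\<Prod>j\<in>{1..d}. S j \<alpha>))
          \<le> Cconst d * Q powr (- 1 / 2) * P ^ (d - 2) / ln P"
    unfolding Let_def qm_def[symmetric] P_def[symmetric]
  proof (rule core[OF d q1 perm PF(1) sP PF(3) qmj qm1 refl])
    fix a assume "a \<in> {\<alpha> \<in> {\<alpha>. 0 < \<alpha> \<and> 1 / (8 * real d * P * sqrt (Min ((\<lambda>j. \<bar>q j\<bar>) ` {1..d}))) < \<alpha> \<and> \<alpha> < upar P}.
        \<forall>i\<in>{1..<d}. sqrt \<bar>q (\<pi> i)\<bar> * norm (Ssum d P (q (\<pi> i)) \<alpha>) \<le> sqrt \<bar>q (\<pi> (i + 1))\<bar> * norm (Ssum d P (q (\<pi> (i + 1))) \<alpha>)} -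
       {\<alpha> \<in> {\<alpha> \<in> {\<alpha>. 0 < \<alpha> \<and> 1 / (8 * real d * P * sqrt (Min ((\<lambda>j. \<bar>q j\<bar>) ` {1..d}))) < \<alpha> \<and> \<alpha> < upar P}.
        \<forall>i\<in>{1..<d}. sqrt \<bar>q (\<pi> i)\<bar> * norm (Ssum d P (q (\<pi> i)) \<alpha>) \<le> sqrt \<bar>q (\<pi> (i + 1))\<bar> * norm (Ssum d P (q (\<pi> (i + 1))) \<alpha>)}.
        \<forall>i\<in>{1..d}. P * ((upar P)\<^sup>2 * qm) powr (- 1 / real (min i (d - 4))) < sqrt \<bar>q (\<pi> i)\<bar> * norm (Ssum d P (q (\<pi> i)) \<alpha>)}"
    then show "0 \<le> a \<and> a \<le> upar P
        \<and> (\<forall>i\<in>{1..<d}. sqrt \<bar>q (\<pi> i)\<bar> * norm (Ssum d P (q (\<pi> i)) a) \<le> sqrt \<bar>q (\<pi> (i + 1))\<bar> * norm (Ssum d P (q (\<pi> (i + 1))) a))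
        \<and> (\<exists>i\<in>{1..d}. \<not> (sqrt \<bar>q (\<pi> i)\<bar> * norm (Ssum d P (q (\<pi> i)) a) > P * ((upar P)\<^sup>2 * qm) powr (- 1 / real (min i (d - 4)))))"
      by auto
  qed
qed


end
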